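(* Let $x\in V(D^+)\setminus\{s\}$ and $y\in C(x)$. Then there are two internally disjoint directed paths in $D^+$, one from $I_s(x)$ to $x$ and one from $y$ to $x$.
   Context: $G=(V,E,w)$ is a simple, connected, undirected graph with positive edge lengths, $s,t\in V$. $D$ is the union of all shortest $st$-paths of $G$, and $D^+$ is the directed acyclic graph obtained from $D$ by orienting every edge toward $t$. $x\prec y$ means $x$ is an ancestor of $y$ in $D^+$ (a directed path of positive length from $x$ to $y$ exists). For $x\neq s$, $v\neq x$ is an $s$-dominator of $x$ if every directed path from $s$ to $x$ in $D^+$ contains $v$, and $I_s(x)$ is the $s$-dominator of $x$ closest to $x$ (every other $s$-dominator of $x$ is an $s$-dominator of $I_s(x)$). For $x\neq s$, $C(x)=\{v\in V(D^+): I_s(x)\prec v\prec x\}$. Two paths are internally disjoint if they share no vertex other than their endpoints. *)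

theory Defs
  imports Complex_Main
begin

definition simple_graph :: "'a set \<Rightarrow> 'a set set \<Rightarrow> bool" where
  "simple_graph V E \<longleftrightarrow> finite V \<and> (\<forall>e\<in>E. \<exists>u v. e = {u, v} \<and> u \<noteq> v \<and> u \<in> V \<and> v \<in> V)"

definition upath :: "'a set \<Rightarrow> 'a set set \<Rightarrow> 'a list \<Rightarrow> bool" where
  "upath V E p \<longleftrightarrow> p \<noteq> [] \<and> distinct p \<and> set p \<subseteq> V \<and>
     (\<forall>i < length p - 1. {p ! i, p ! Suc i} \<in> E)"

definition connected_graph :: "'a set \<Rightarrow> 'a set set \<Rightarrow> bool" where
  "connected_graph V E \<longleftrightarrow> (\<forall>u\<in>V. \<forall>v\<in>V. \<exists>p. upath V E p \<and> hd p = u \<and> last p = v)"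

definition plen :: "('a set \<Rightarrow> real) \<Rightarrow> 'a list \<Rightarrow> real" where
  "plen w p = (\<Sum>i < length p - 1. w {p ! i, p ! Suc i})"

definition shortest_path :: "'a set \<Rightarrow> 'a set set \<Rightarrow> ('a set \<Rightarrow> real) \<Rightarrow> 'a \<Rightarrow> 'a \<Rightarrow> 'a list \<Rightarrow> bool" where
  "shortest_path V E w s t p \<longleftrightarrow> upath V E p \<and> hd p = s \<and> last p = t \<and>
     (\<forall>q. upath V E q \<and> hd q = s \<and> last q = t \<longrightarrow> plen w p \<le> plen w q)"

definition DV :: "'a set \<Rightarrow> 'a set set \<Rightarrow> ('a set \<Rightarrow> real) \<Rightarrow> 'a \<Rightarrow> 'a \<Rightarrow> 'a set" where
  "DV V E w s t = \<Union>{set p | p. shortest_path V E w s t p}"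

definition DA :: "'a set \<Rightarrow> 'a set set \<Rightarrow> ('a set \<Rightarrow> real) \<Rightarrow> 'a \<Rightarrow> 'a \<Rightarrow> ('a \<times> 'a) set" where
  "DA V E w s t = {(p ! i, p ! Suc i) | p i. shortest_path V E w s t p \<and> i < length p - 1}"

definition dpath :: "'a set \<Rightarrow> 'a set set \<Rightarrow> ('a set \<Rightarrow> real) \<Rightarrow> 'a \<Rightarrow> 'a \<Rightarrow> 'a list \<Rightarrow> bool" where
  "dpath V E w s t p \<longleftrightarrow> p \<noteq> [] \<and> distinct p \<and> set p \<subseteq> DV V E w s t \<and>
     (\<forall>i < length p - 1. (p ! i, p ! Suc i) \<in> DA V E w s t)"

definition anc :: "'a set \<Rightarrow> 'a set set \<Rightarrow> ('a set \<Rightarrow> real) \<Rightarrow> 'a \<Rightarrow> 'a \<Rightarrow> 'a \<Rightarrow> 'a \<Rightarrow> bool" where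
  "anc V E w s t x y \<longleftrightarrow> (\<exists>p. dpath V E w s t p \<and> hd p = x \<and> last p = y \<and> length p \<ge> 2)"

definition sdom :: "'a set \<Rightarrow> 'a set set \<Rightarrow> ('a set \<Rightarrow> real) \<Rightarrow> 'a \<Rightarrow> 'a \<Rightarrow> 'a \<Rightarrow> 'a \<Rightarrow> bool" where
  "sdom V E w s t v x \<longleftrightarrow> v \<noteq> x \<and>
     (\<forall>p. dpath V E w s t p \<and> hd p = s \<and> last p = x \<longrightarrow> v \<in> set p)"

definition idom :: "'a set \<Rightarrow> 'a set set \<Rightarrow> ('a set \<Rightarrow> real) \<Rightarrow> 'a \<Rightarrow> 'a \<Rightarrow> 'a \<Rightarrow> 'a" where
  "idom V E w s t x = (THE v. sdom V E w s t v x \<and>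
      (\<forall>u. sdom V E w s t u x \<and> u \<noteq> v \<longrightarrow> sdom V E w s t u v))"

definition Cset :: "'a set \<Rightarrow> 'a set set \<Rightarrow> ('a set \<Rightarrow> real) \<Rightarrow> 'a \<Rightarrow> 'a \<Rightarrow> 'a \<Rightarrow> 'a set" where
  "Cset V E w s t x = {v \<in> DV V E w s t. anc V E w s t (idom V E w s t x) v \<and> anc V E w s t v x}"

definition internally_disjoint :: "'a list \<Rightarrow> 'a list \<Rightarrow> bool" where
  "internally_disjoint P Q \<longleftrightarrow> (\<forall>v \<in> set P \<inter> set Q. v \<in> {hd P, last P} \<and> v \<in> {hd Q, last Q})"

end

theory Submission
  imports Defs
begin


fun wlk :: "('a \<Rightarrow> 'a \<Rightarrow> bool) \<Rightarrow> 'a list \<Rightarrow> bool" where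
  "wlk R (a # b # xs) = (R a b \<and> wlk R (b # xs))"
| "wlk R _ = True"

fun cost :: "('a \<Rightarrow> 'a \<Rightarrow> real) \<Rightarrow> 'a list \<Rightarrow> real" where
  "cost f (a # b # xs) = f a b + cost f (b # xs)"
| "cost f _ = 0"

lemma wlk_iff: "wlk R p \<longleftrightarrow> (\<forall>i < length p - 1. R (p!i) (p!Suc i))"
  by (induction R p rule: wlk.induct) (auto simp: All_less_Suc2)

lemma cost_sum: "cost f p = (\<Sum>i < length p - 1. f (p!i) (p!Suc i))"
proof (induction f p rule: cost.induct)
  case (1 f a b xs)
  have "(\<Sum>i < length (a#b#xs) - 1. f ((a#b#xs)!i) ((a#b#xs)!Suc i)) = (\<Sum>i < Suc (length xs). f ((a#b#xs)!i) ((a#b#xs)!Suc i))" by simp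
  also have "\<dots> = f a b + (\<Sum>i < length xs. f ((b#xs)!i) ((b#xs)!Suc i))"
    by (subst sum.lessThan_Suc_shift) simp
  also have "\<dots> = f a b + (\<Sum>i < length (b#xs) - 1. f ((b#xs)!i) ((b#xs)!Suc i))" by simp
  finally have "(\<Sum>i < length (a#b#xs) - 1. f ((a#b#xs)!i) ((a#b#xs)!Suc i)) = f a b + cost f (b#xs)"
    using 1 by (simp only:)
  note A = this
  have B: "cost f (a#b#xs) = f a b + cost f (b#xs)" by (rule cost.simps(1))
  show ?case by (rule trans[OF B sym[OF A]])
qed simp_all

lemma wlk_app: "wlk R (xs @ y # ys) \<longleftrightarrow> wlk R (xs @ [y]) \<and> wlk R (y # ys)"
  by (induction xs rule: induct_list012) auto

lemma cost_app: "cost f (xs @ y # ys) = cost f (xs @ [y]) + cost f (y # ys)"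
  by (induction xs rule: induct_list012) auto

lemma cost_snoc: "xs \<noteq> [] \<Longrightarrow> cost f (xs @ [b]) = cost f xs + f (last xs) b"
  by (induction xs rule: induct_list012) auto

lemma cost_nonneg: "wlk R xs \<Longrightarrow> \<forall>a b. R a b \<longrightarrow> 0 \<le> f a b \<Longrightarrow> 0 \<le> cost f xs"
  by (induction f xs rule: cost.induct) auto

lemma wlk_take: "wlk R xs \<Longrightarrow> wlk R (take n xs)"
  unfolding wlk_iff
proof (intro allI impI)
  fix i assume a: "\<forall>i<length xs - 1. R (xs ! i) (xs ! Suc i)" and i: "i < length (take n xs) - 1"
  then have "i < length xs - 1" "Suc i < n" by auto
  then have "R (xs ! i) (xs ! Suc i)" using a by blast
  then show "R (take n xs ! i) (take n xs ! Suc i)" using \<open>Suc i < n\<close> by simp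
qed

lemma wlk_drop: "wlk R xs \<Longrightarrow> wlk R (drop n xs)"
  unfolding wlk_iff
proof (intro allI impI)
  fix i assume a: "\<forall>i<length xs - 1. R (xs ! i) (xs ! Suc i)" and i: "i < length (drop n xs) - 1"
  then have "n + i < length xs - 1" "n \<le> length xs" by auto
  then have "R (xs ! (n+i)) (xs ! Suc (n+i))" using a by blast
  then show "R (drop n xs ! i) (drop n xs ! Suc i)" using \<open>n \<le> length xs\<close> by simp
qed

lemma wlk_glue: "wlk R xs \<Longrightarrow> wlk R ys \<Longrightarrow> ys \<noteq> [] \<Longrightarrow> xs \<noteq> [] \<Longrightarrow> last xs = hd ys \<Longrightarrow> wlk R (xs @ tl ys)"
proof (induction xs rule: induct_list012)
  case (2 x) then show ?case by (cases ys) auto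
qed auto
lemma cost_glue: "ys \<noteq> [] \<Longrightarrow> xs \<noteq> [] \<Longrightarrow> last xs = hd ys \<Longrightarrow> cost f (xs @ tl ys) = cost f xs + cost f ys"
proof (induction xs rule: induct_list012)
  case (2 x) then show ?case by (cases ys) auto
qed auto
lemma glue_hd_last: "xs \<noteq> [] \<Longrightarrow> ys \<noteq> [] \<Longrightarrow> last xs = hd ys \<Longrightarrow> hd (xs @ tl ys) = hd xs \<and> last (xs @ tl ys) = last ys \<and> set (xs @ tl ys) \<subseteq> set xs \<union> set ys"
proof -
  assume a: "xs \<noteq> []" "ys \<noteq> []" "last xs = hd ys"
  then obtain y zs where ys: "ys = y # zs" by (cases ys) auto
  show ?thesis using a unfolding ys by (cases zs) (auto dest: list.set_sel(2))
qed
lemma shortcut: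
  assumes "wlk R xs" "xs \<noteq> []" "\<forall>a b. R a b \<longrightarrow> 0 \<le> f a b"
  shows "\<exists>ys. ys \<noteq> [] \<and> distinct ys \<and> hd ys = hd xs \<and> last ys = last xs \<and> set ys \<subseteq> set xs \<and> wlk R ys \<and> cost f ys \<le> cost f xs"
  using assms
proof (induction "length xs" arbitrary: xs rule: less_induct)
  case less
  show ?case
  proof (cases "distinct xs")
    case True then show ?thesis using less.prems by blast
  next
    case False
    then obtain as v bs cs where xs: "xs = as @ [v] @ bs @ [v] @ cs" using not_distinct_decomp by blast
    define xs' where "xs' = as @ v # cs"
    have xs2: "xs = as @ v # (bs @ v # cs)" using xs by simp
    have w0: "wlk R (as @ v # (bs @ v # cs))" using less.prems(1) xs2 by simp
    have w1: "wlk R (as @ [v])" "wlk R (v # bs @ v # cs)"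
      using w0 wlk_app[of R as v "bs @ v # cs"] by blast+
    have w2: "wlk R ((v # bs) @ [v])" "wlk R (v # cs)"
      using w1(2) wlk_app[of R "v#bs" v cs] by auto
    have wx': "wlk R xs'" unfolding xs'_def using w1(1) w2(2) wlk_app[of R as v cs] by blast
    have e1: "cost f xs = cost f (as @ [v]) + cost f (v # bs @ v # cs)"
      using xs2 cost_app[of f as v "bs @ v # cs"] by simp
    have e2: "cost f (v # bs @ v # cs) = cost f ((v # bs) @ [v]) + cost f (v # cs)"
      using cost_app[of f "v#bs" v cs] by simp
    have e3: "cost f xs' = cost f (as @ [v]) + cost f (v # cs)"
      unfolding xs'_def using cost_app[of f as v cs] by simp
    have "0 \<le> cost f ((v # bs) @ [v])" using cost_nonneg w2(1) less.prems(3) by blast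
    then have c: "cost f xs' \<le> cost f xs" using e1 e2 e3 by linarith
    have len: "length xs' < length xs" unfolding xs'_def xs by simp
    have hl1: "hd xs' = hd xs" unfolding xs'_def xs2 by (cases as) simp_all
    have hl2: "last xs' = last xs" unfolding xs'_def xs2 by simp
    have hl3: "set xs' \<subseteq> set xs" unfolding xs'_def xs2 by auto
    note hl = hl1 hl2 hl3
    have ne: "xs' \<noteq> []" unfolding xs'_def by simp
    obtain ys where Y: "ys \<noteq> [] \<and> distinct ys \<and> hd ys = hd xs' \<and> last ys = last xs' \<and> set ys \<subseteq> set xs' \<and> wlk R ys \<and> cost f ys \<le> cost f xs'"
      using less.hyps[OF len wx' ne less.prems(3)] by blast
    have "set ys \<subseteq> set xs" using Y hl3 by blast
    moreover have "cost f ys \<le> cost f xs" using Y c by linarith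
    ultimately show ?thesis using Y hl1 hl2 by (intro exI[of _ ys] conjI) simp_all
  qed
qed



lemma last_take_Suc: "k < length p \<Longrightarrow> last (take (Suc k) p) = p ! k"
  by (simp add: take_Suc_conv_app_nth)

lemma hd_take_Suc: "p \<noteq> [] \<Longrightarrow> hd (take (Suc k) p) = hd p"
  by (cases p) auto

lemma hd_drop_nth: "k < length p \<Longrightarrow> hd (drop k p) = p ! k"
  by (simp add: hd_drop_conv_nth)

lemma last_drop: "k < length p \<Longrightarrow> last (drop k p) = last p"
  by simp

locale G =
  fixes V :: "'a set" and E :: "'a set set" and w :: "'a set \<Rightarrow> real" and s t :: 'a
  assumes sg: "simple_graph V E" and wpos: "\<forall>e\<in>E. w e > 0" and sV: "s \<in> V" and tV: "t \<in> V"
begin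

abbreviation "ER \<equiv> \<lambda>a b. {a,b} \<in> E"
abbreviation "WW \<equiv> \<lambda>a b. w {a,b}"
abbreviation "SP \<equiv> shortest_path V E w s t"
abbreviation "N \<equiv> DV V E w s t"
abbreviation "AR \<equiv> \<lambda>a b. (a,b) \<in> DA V E w s t"
abbreviation "DP \<equiv> dpath V E w s t"

lemma upath_iff: "upath V E p \<longleftrightarrow> p \<noteq> [] \<and> distinct p \<and> set p \<subseteq> V \<and> wlk ER p"
  by (simp add: upath_def wlk_iff)

lemma plen_cost: "plen w p = cost WW p"
  by (simp add: plen_def cost_sum)

lemma dpath_iff: "DP p \<longleftrightarrow> p \<noteq> [] \<and> distinct p \<and> set p \<subseteq> N \<and> wlk AR p"
  by (simp add: dpath_def wlk_iff)

lemma WW_nonneg: "\<forall>a b. ER a b \<longrightarrow> 0 \<le> WW a b"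
  using wpos by (auto intro: less_imp_le)

lemma sp_dpath: "SP p \<Longrightarrow> DP p \<and> hd p = s \<and> last p = t"
proof -
  assume sp: "SP p"
  then have u: "upath V E p" "hd p = s" "last p = t" by (auto simp: shortest_path_def)
  have "set p \<subseteq> N" using sp unfolding DV_def by blast
  moreover have "wlk AR p" unfolding wlk_iff DA_def using sp by blast
  ultimately show ?thesis using u by (auto simp: dpath_iff upath_iff)
qed

lemma N_sub_V: "N \<subseteq> V"
  unfolding DV_def shortest_path_def upath_def by blast

lemma finite_N: "finite N"
  using sg N_sub_V unfolding simple_graph_def by (meson finite_subset)

lemma exch:
  assumes sp: "SP p" and k: "k < length p" and q: "upath V E q" "hd q = s" "last q = p!k"
  shows "cost WW (take (Suc k) p) \<le> cost WW q"
proof (rule ccontr)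
  assume lt: "\<not> ?thesis"
  have up: "upath V E p" "hd p = s" "last p = t" and mn: "\<And>r. upath V E r \<Longrightarrow> hd r = s \<Longrightarrow> last r = t \<Longrightarrow> plen w p \<le> plen w r"
    using sp by (auto simp: shortest_path_def)
  have pne: "p \<noteq> []" using k by auto
  define W where "W = q @ tl (drop k p)"
  have qne: "q \<noteq> []" using q upath_iff by auto
  have dne: "drop k p \<noteq> []" using k by simp
  have lq: "last q = hd (drop k p)" using q k hd_drop_nth by metis
  have wW: "wlk ER W" unfolding W_def
  proof (rule wlk_glue[OF _ _ dne qne lq])
    show "wlk ER q" using q upath_iff by auto
    show "wlk ER (drop k p)" using up upath_iff wlk_drop by auto
  qed
  have cW: "cost WW W = cost WW q + cost WW (drop k p)" unfolding W_def using cost_glue[OF dne qne lq] .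
  have tk: "take (Suc k) p \<noteq> []" "last (take (Suc k) p) = hd (drop k p)"
    using k last_take_Suc[OF k] hd_drop_nth[OF k] by auto
  have "take (Suc k) p @ tl (drop k p) = p"
    by (metis append_take_drop_id drop_Suc tl_drop)
  then have cp: "cost WW p = cost WW (take (Suc k) p) + cost WW (drop k p)"
    using cost_glue[OF dne tk] by simp
  have hlW: "hd W = s" "last W = t" "set W \<subseteq> V"
    using glue_hd_last[OF qne dne lq] q up k unfolding W_def
    by (auto simp: upath_iff dest: in_set_dropD)
  have Wne: "W \<noteq> []" using qne W_def by simp
  obtain U where U: "U \<noteq> []" "distinct U" "hd U = hd W" "last U = last W" "set U \<subseteq> set W" "wlk ER U" "cost WW U \<le> cost WW W"
    using shortcut[OF wW Wne WW_nonneg] by blast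
  have "upath V E U" using U hlW by (auto simp: upath_iff)
  then have "plen w p \<le> plen w U" using mn U hlW by auto
  then show False using lt cp cW U(7) by (simp add: plen_cost)
qed

definition pot :: "'a \<Rightarrow> real" where
  "pot v = (SOME c. \<exists>p k. SP p \<and> k < length p \<and> p!k = v \<and> c = cost WW (take (Suc k) p))"

lemma take_upath: "SP p \<Longrightarrow> k < length p \<Longrightarrow> upath V E (take (Suc k) p) \<and> hd (take (Suc k) p) = s \<and> last (take (Suc k) p) = p!k"
proof -
  assume sp: "SP p" and k: "k < length p"
  then have up: "upath V E p" "hd p = s" by (auto simp: shortest_path_def)
  then show ?thesis using k last_take_Suc[OF k] hd_take_Suc[of p k] wlk_take[of ER p "Suc k"]
    by (auto simp: upath_iff dest: in_set_takeD)
qed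

lemma pot_eq: assumes sp: "SP p" and k: "k < length p" shows "pot (p!k) = cost WW (take (Suc k) p)"
proof -
  have ex: "\<exists>c. \<exists>p' k'. SP p' \<and> k' < length p' \<and> p'!k' = p!k \<and> c = cost WW (take (Suc k') p')"
    using sp k by blast
  from someI_ex[OF ex] obtain p' k' where p': "SP p'" "k' < length p'" "p'!k' = p!k" "pot (p!k) = cost WW (take (Suc k') p')"
    unfolding pot_def by blast
  have 1: "cost WW (take (Suc k') p') \<le> cost WW (take (Suc k) p)"
    using exch[OF p'(1,2)] take_upath[OF sp k] p'(3) by auto
  have 2: "cost WW (take (Suc k) p) \<le> cost WW (take (Suc k') p')"
    using exch[OF sp k] take_upath[OF p'(1,2)] p'(3) by auto
  show ?thesis using 1 2 p'(4) by linarith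
qed

lemma pot_arc: assumes "AR a b" shows "pot a < pot b"
proof -
  obtain p i where pi: "SP p" "i < length p - 1" "a = p!i" "b = p!Suc i"
    using assms unfolding DA_def by blast
  have up: "upath V E p" using pi by (auto simp: shortest_path_def)
  have e: "{p!i, p!Suc i} \<in> E" using up pi unfolding upath_def by blast
  have tne: "take (Suc i) p \<noteq> []" using pi by (cases p) auto
  have "take (Suc (Suc i)) p = take (Suc i) p @ [p!Suc i]" using pi by (simp add: take_Suc_conv_app_nth)
  then have "cost WW (take (Suc (Suc i)) p) = cost WW (take (Suc i) p) + WW (p!i) (p!Suc i)"
    using cost_snoc[OF tne] last_take_Suc[of i p] pi by simp
  moreover have "pot b = cost WW (take (Suc (Suc i)) p)" using pot_eq[OF pi(1)] pi by simp
  moreover have "pot a = cost WW (take (Suc i) p)" using pot_eq[OF pi(1)] pi by simp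
  moreover have "WW (p!i) (p!Suc i) > 0" using e wpos by blast
  ultimately show ?thesis by linarith
qed

lemma pot_walk: "wlk AR q \<Longrightarrow> v \<in> set q \<Longrightarrow> pot (hd q) \<le> pot v \<and> pot v \<le> pot (last q)"
proof (induction q arbitrary: v rule: induct_list012)
  case (3 a b xs)
  have ab: "pot a < pot b" "wlk AR (b # xs)" using 3(3) pot_arc by auto
  have bl: "pot b \<le> pot (last (b # xs))" using 3(2)[OF ab(2), of b] by simp
  show ?case
  proof (cases "v = a")
    case True then show ?thesis using ab bl by simp
  next
    case False then have "v \<in> set (b # xs)" using 3(4) by simp
    then show ?thesis using 3(2)[OF ab(2)] ab by fastforce
  qed
qed auto

lemma pot_walk_strict: "wlk AR q \<Longrightarrow> 2 \<le> length q \<Longrightarrow> pot (hd q) < pot (last q)"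
proof -
  assume a: "wlk AR q" "2 \<le> length q"
  then obtain x y r where q: "q = x # y # r" by (metis One_nat_def Suc_1 Suc_le_length_iff)
  then have "pot x < pot y" "wlk AR (y # r)" using a pot_arc by auto
  moreover have "pot y \<le> pot (last (y # r))" using pot_walk[of "y # r" y] calculation by simp
  ultimately show ?thesis using q by simp
qed

lemma anc_pot: "anc V E w s t a b \<Longrightarrow> pot a < pot b"
  unfolding anc_def dpath_iff using pot_walk_strict by blast

lemma walk_dpath: "wlk AR q \<Longrightarrow> q \<noteq> [] \<Longrightarrow> set q \<subseteq> N \<Longrightarrow>
   \<exists>ys. DP ys \<and> hd ys = hd q \<and> last ys = last q \<and> set ys \<subseteq> set q"
proof -
  assume a: "wlk AR q" "q \<noteq> []" "set q \<subseteq> N"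
  have nn: "\<forall>a b. AR a b \<longrightarrow> 0 \<le> (\<lambda>_ _. 0::real) a b" by simp
  from shortcut[OF a(1,2) nn] obtain ys where "ys \<noteq> [] \<and> distinct ys \<and> hd ys = hd q \<and> last ys = last q \<and> set ys \<subseteq> set q \<and> wlk AR ys"
    by blast
  then show ?thesis using a(3) by (auto simp: dpath_iff)
qed

lemma dpath_anc: "DP p \<Longrightarrow> hd p \<noteq> last p \<Longrightarrow> anc V E w s t (hd p) (last p)"
proof -
  assume a: "DP p" "hd p \<noteq> last p"
  have "length p \<noteq> 0" using a by (auto simp: dpath_iff)
  moreover have "length p \<noteq> 1" using a by (cases p) auto
  ultimately have "2 \<le> length p" by linarith
  then show ?thesis using a unfolding anc_def by (intro exI[of _ p]) auto
qed

lemma walk_anc: "wlk AR q \<Longrightarrow> q \<noteq> [] \<Longrightarrow> set q \<subseteq> N \<Longrightarrow> hd q \<noteq> last q \<Longrightarrow> anc V E w s t (hd q) (last q)"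
  using walk_dpath dpath_anc by metis

lemma dpath_take: "DP p \<Longrightarrow> j < length p \<Longrightarrow> DP (take (Suc j) p) \<and> hd (take (Suc j) p) = hd p \<and> last (take (Suc j) p) = p!j"
  using last_take_Suc[of j p] hd_take_Suc[of p j] wlk_take[of AR p "Suc j"]
  by (auto simp: dpath_iff dest: in_set_takeD)

lemma dpath_drop: "DP p \<Longrightarrow> j < length p \<Longrightarrow> DP (drop j p) \<and> hd (drop j p) = p!j \<and> last (drop j p) = last p"
  using hd_drop_nth[of j p] wlk_drop[of AR p j]
  by (auto simp: dpath_iff dest: in_set_dropD)

lemma in_dpath_split: "DP p \<Longrightarrow> v \<in> set p \<Longrightarrow> \<exists>j<length p. p!j = v"
  by (simp add: in_set_conv_nth)

end

locale GX = G +
  fixes x :: 'a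
  assumes xN: "x \<in> DV V E w s t" and xs: "x \<noteq> s"
begin

abbreviation "D u \<equiv> sdom V E w s t u x"

lemma ex_p0: "\<exists>p. DP p \<and> hd p = s \<and> last p = x"
proof -
  obtain p where p: "SP p" "x \<in> set p" using xN unfolding DV_def by blast
  then obtain k where k: "k < length p" "p!k = x" by (auto simp: in_set_conv_nth)
  have "DP p" "hd p = s" using sp_dpath[OF p(1)] by auto
  then show ?thesis using dpath_take[of p k] k by metis
qed

definition p0 where "p0 = (SOME p. DP p \<and> hd p = s \<and> last p = x)"

lemma p0: "DP p0" "hd p0 = s" "last p0 = x"
  using someI_ex[OF ex_p0] unfolding p0_def by auto

lemma p0_ne: "p0 \<noteq> []" and p0_dist: "distinct p0"
  using p0 by (auto simp: dpath_iff)

lemma dom_in_p0: "D u \<Longrightarrow> u \<in> set p0"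
  using p0 unfolding sdom_def by blast

lemma D_s: "D s"
  unfolding sdom_def using xs by (auto simp: dpath_iff)

lemma dom_order:
  assumes Du: "D u" and ij: "i < j" "j < length p0" and u: "p0!i = u"
  shows "sdom V E w s t u (p0!j)"
  unfolding sdom_def
proof (intro conjI allI impI)
  show "u \<noteq> p0!j" using u ij p0_dist nth_eq_iff_index_eq by fastforce
  fix q assume q: "DP q \<and> hd q = s \<and> last q = p0 ! j"
  show "u \<in> set q"
  proof (rule ccontr)
    assume nu: "u \<notin> set q"
    have dd: "DP (drop j p0)" "hd (drop j p0) = p0!j" "last (drop j p0) = x" using dpath_drop[OF p0(1) ij(2)] p0 by auto
    have qne: "q \<noteq> []" and dne: "drop j p0 \<noteq> []" using q dd by (auto simp: dpath_iff)
    have lq: "last q = hd (drop j p0)" using q dd by simp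
    have wW: "wlk AR (q @ tl (drop j p0))" using wlk_glue[OF _ _ dne qne lq] q dd by (auto simp: dpath_iff)
    have hl: "hd (q @ tl (drop j p0)) = s" "last (q @ tl (drop j p0)) = x" "set (q @ tl (drop j p0)) \<subseteq> set q \<union> set (drop j p0)"
      using glue_hd_last[OF qne dne lq] q dd by auto
    have "u \<notin> set (drop j p0)"
    proof
      assume "u \<in> set (drop j p0)"
      then obtain m where "m < length (drop j p0)" "drop j p0 ! m = u" by (auto simp: in_set_conv_nth)
      then have "p0 ! (j + m) = p0 ! i" "j + m < length p0" using u ij by auto
      then show False using nth_eq_iff_index_eq[OF p0_dist] ij by fastforce
    qed
    then have nuW: "u \<notin> set (q @ tl (drop j p0))" using hl(3) nu by blast
    have "set (q @ tl (drop j p0)) \<subseteq> N" using hl(3) q dd by (auto simp: dpath_iff)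
    moreover have "q @ tl (drop j p0) \<noteq> []" using qne by simp
    ultimately obtain ys where ys: "DP ys" "hd ys = hd (q @ tl (drop j p0))" "last ys = last (q @ tl (drop j p0))"
       "set ys \<subseteq> set (q @ tl (drop j p0))"
      using walk_dpath[OF wW] by blast
    have "u \<notin> set ys" using ys(4) nuW by blast
    then show False using Du ys hl unfolding sdom_def by auto
  qed
qed

lemma sdom_before: "sdom V E w s t u (p0!j) \<Longrightarrow> j < length p0 \<Longrightarrow> \<exists>i<j. p0!i = u"
proof -
  assume a: "sdom V E w s t u (p0!j)" "j < length p0"
  have "DP (take (Suc j) p0)" "hd (take (Suc j) p0) = s" "last (take (Suc j) p0) = p0!j"
    using dpath_take[OF p0(1) a(2)] p0 by auto
  then have "u \<in> set (take (Suc j) p0)" "u \<noteq> p0!j" using a(1) unfolding sdom_def by blast+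
  then have "u \<in> set (take j p0)" using a(2) by (auto simp: take_Suc_conv_app_nth)
  then show ?thesis using a(2) by (auto simp: in_set_conv_nth)
qed

definition "Pd v \<longleftrightarrow> D v \<and> (\<forall>u. D u \<and> u \<noteq> v \<longrightarrow> sdom V E w s t u v)"

lemma idom_prop: "D (idom V E w s t x) \<and> (\<forall>u. D u \<and> u \<noteq> idom V E w s t x \<longrightarrow> sdom V E w s t u (idom V E w s t x))"
proof -
  define J where "J = {i. i < length p0 \<and> D (p0!i)}"
  have fJ: "finite J" unfolding J_def by simp
  have 0: "0 \<in> J" unfolding J_def using p0_ne p0(2) D_s by (simp add: hd_conv_nth)
  define j0 where "j0 = Max J"
  have Jne: "J \<noteq> {}" using 0 by blast
  have j0: "j0 \<in> J" "\<And>i. i \<in> J \<Longrightarrow> i \<le> j0" unfolding j0_def using Max_in[OF fJ Jne] Max_ge[OF fJ] by auto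
  have P0: "Pd (p0!j0)" unfolding Pd_def
  proof (intro conjI allI impI)
    show "D (p0!j0)" using j0 unfolding J_def by simp
    fix u assume u: "D u \<and> u \<noteq> p0!j0"
    then obtain i where i: "i < length p0" "p0!i = u" using dom_in_p0 by (auto simp: in_set_conv_nth)
    then have "i \<in> J" using u unfolding J_def by simp
    then have "i < j0" using j0(2) u i by (metis le_neq_implies_less)
    then show "sdom V E w s t u (p0!j0)" using dom_order u i j0 unfolding J_def by blast
  qed
  have uniq: "v = p0!j0" if Pv: "Pd v" for v
  proof (rule ccontr)
    assume ne: "v \<noteq> p0!j0"
    have Dv: "D v" using Pv Pd_def by blast
    then obtain j1 where j1: "j1 < length p0" "p0!j1 = v" using dom_in_p0 by (auto simp: in_set_conv_nth)
    have j0l: "j0 < length p0" using j0 J_def by simp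
    have "sdom V E w s t (p0!j0) v" using Pv ne P0 unfolding Pd_def by metis
    then obtain i where "i < j1" "p0!i = p0!j0" using sdom_before j1 by metis
    then have "j0 < j1" using nth_eq_iff_index_eq[OF p0_dist] j0l j1 by (metis order.strict_trans)
    moreover have "sdom V E w s t v (p0!j0)" using P0 ne Dv unfolding Pd_def by metis
    then obtain i' where "i' < j0" "p0!i' = p0!j1" using sdom_before j0l j1 by metis
    then have "j1 < j0" using nth_eq_iff_index_eq[OF p0_dist] j0l j1 by (metis order.strict_trans)
    ultimately show False by simp
  qed
  have "idom V E w s t x = p0!j0"
    unfolding idom_def using P0 uniq unfolding Pd_def by (rule the_equality) 
  then show ?thesis using P0 unfolding Pd_def by simp
qed


abbreviation "II \<equiv> idom V E w s t x"
abbreviation "anc' \<equiv> anc V E w s t"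

lemma I_path: "\<exists>P. DP P \<and> hd P = II \<and> last P = x"
proof -
  have "II \<in> set p0" using idom_prop dom_in_p0 by blast
  then obtain j where "j < length p0" "p0!j = II" by (auto simp: in_set_conv_nth)
  then show ?thesis using dpath_drop[OF p0(1)] p0 by metis
qed

lemma avoid: assumes a1: "anc' II y" and a2: "anc' y x"
  shows "\<exists>R. DP R \<and> hd R = II \<and> last R = x \<and> y \<notin> set R"
proof (rule ccontr)
  assume "\<not> ?thesis"
  then have all: "\<And>R. DP R \<Longrightarrow> hd R = II \<Longrightarrow> last R = x \<Longrightarrow> y \<in> set R" by blast
  have p1: "pot II < pot y" "pot y < pot x" using anc_pot a1 a2 by auto
  have Dy: "D y" unfolding sdom_def
  proof (intro conjI allI impI)
    show "y \<noteq> x" using p1 by auto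
    fix q assume q: "DP q \<and> hd q = s \<and> last q = x"
    then have "II \<in> set q" using idom_prop unfolding sdom_def by blast
    then obtain j where j: "j < length q" "q!j = II" by (auto simp: in_set_conv_nth)
    then have "y \<in> set (drop j q)" using all dpath_drop q by metis
    then show "y \<in> set q" by (meson in_set_dropD)
  qed
  have "y \<noteq> II" using p1 by auto
  then have "sdom V E w s t y II" using idom_prop Dy by blast
  moreover have "II \<in> set p0" using idom_prop dom_in_p0 by blast
  then obtain j where j: "j < length p0" "p0!j = II" by (auto simp: in_set_conv_nth)
  have tk: "DP (take (Suc j) p0)" "hd (take (Suc j) p0) = s" "last (take (Suc j) p0) = II"
    using dpath_take[OF p0(1) j(1)] j p0 by auto
  ultimately have "y \<in> set (take (Suc j) p0)" unfolding sdom_def by blast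
  then have "pot y \<le> pot II" using pot_walk[of "take (Suc j) p0" y] tk by (auto simp: dpath_iff)
  then show False using p1 by simp
qed

lemma glue_dp: "DP a \<Longrightarrow> DP b \<Longrightarrow> last a = hd b \<Longrightarrow> \<exists>P. DP P \<and> hd P = hd a \<and> last P = last b \<and> set P \<subseteq> set a \<union> set b"
proof -
  assume a: "DP a" "DP b" "last a = hd b"
  have ne: "a \<noteq> []" "b \<noteq> []" using a by (auto simp: dpath_iff)
  have wW: "wlk AR (a @ tl b)" using wlk_glue[OF _ _ ne(2,1) a(3)] a by (auto simp: dpath_iff)
  note hl = glue_hd_last[OF ne a(3)]
  have "set (a @ tl b) \<subseteq> N" using hl a by (auto simp: dpath_iff)
  moreover have "a @ tl b \<noteq> []" using ne by simp
  ultimately obtain ys where ys: "DP ys" "hd ys = hd (a @ tl b)" "last ys = last (a @ tl b)" "set ys \<subseteq> set (a @ tl b)"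
    using walk_dpath[OF wW] by blast
  then show ?thesis using hl by (intro exI[of _ ys]) auto
qed

lemma nth_notin_drop: "distinct xs \<Longrightarrow> j < k \<Longrightarrow> j < length xs \<Longrightarrow> xs!j \<notin> set (drop k xs)"
proof
  assume a: "distinct xs" "j < k" "j < length xs" "xs!j \<in> set (drop k xs)"
  then obtain m where "m < length (drop k xs)" "drop k xs ! m = xs!j" by (auto simp: in_set_conv_nth)
  then have "xs ! (k + m) = xs ! j" "k + m < length xs" using a by auto
  then show False using nth_eq_iff_index_eq[OF a(1)] a by fastforce
qed

lemma main:
  assumes "y = x \<or> (anc' II y \<and> anc' y x)" "y \<in> N"
  shows "\<exists>P Q. DP P \<and> hd P = II \<and> last P = x \<and> DP Q \<and> hd Q = y \<and> last Q = x \<and> set P \<inter> set Q \<subseteq> {x}"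
  using assms
proof (induction "card {v \<in> N. pot y < pot v}" arbitrary: y rule: less_induct)
  case less
  show ?case
  proof (cases "y = x")
    case True
    obtain P where P: "DP P \<and> hd P = II \<and> last P = x" using I_path by blast
    have "DP [x]" using xN by (simp add: dpath_iff)
    then show ?thesis using P True by (intro exI[of _ P] exI[of _ "[x]"]) auto
  next
    case False
    then have yI: "anc' II y" and yx: "anc' y x" using less.prems by auto
    obtain p where p: "DP p" "hd p = y" "last p = x" "2 \<le> length p" using yx unfolding anc_def by blast
    define y' where "y' = p!1"
    have "p!0 = y" using p hd_conv_nth[of p] by (auto simp: dpath_iff)
    moreover have "AR (p!0) (p!Suc 0)" using p unfolding dpath_iff wlk_iff by auto
    ultimately have arc: "AR y y'" unfolding y'_def by simp
    have y'N: "y' \<in> N" using p unfolding y'_def dpath_iff by auto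
    have pyy': "pot y < pot y'" using pot_arc arc by blast
    have p1: "pot II < pot y" using anc_pot yI by blast
    have IH_ok: "y' = x \<or> (anc' II y' \<and> anc' y' x)"
    proof (cases "y' = x")
      case False
      have d1: "DP (drop 1 p)" "hd (drop 1 p) = y'" "last (drop 1 p) = x"
        using dpath_drop[OF p(1), of 1] p unfolding y'_def by auto
      have a2: "anc' y' x" using dpath_anc[OF d1(1)] d1 False by simp
      obtain r where r: "DP r" "hd r = II" "last r = y" using yI unfolding anc_def by blast
      have rne: "r \<noteq> []" using r by (simp add: dpath_iff)
      have "wlk AR (r @ tl [y, y'])" using wlk_glue[of AR r "[y, y']"] r rne arc by (simp add: dpath_iff)
      then have wr: "wlk AR (r @ [y'])" by simp
      have "set (r @ [y']) \<subseteq> N" using r y'N by (auto simp: dpath_iff)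
      moreover have "hd (r @ [y']) = II" "last (r @ [y']) = y'" using r rne by auto
      moreover have "II \<noteq> y'" using p1 pyy' by auto
      ultimately have "anc' II y'" using walk_anc[OF wr] by fastforce
      then show ?thesis using a2 by blast
    qed simp
    have lt: "card {v \<in> N. pot y' < pot v} < card {v \<in> N. pot y < pot v}"
    proof (rule psubset_card_mono)
      show "finite {v \<in> N. pot y < pot v}" using finite_N by simp
      show "{v \<in> N. pot y' < pot v} \<subset> {v \<in> N. pot y < pot v}"
        using pyy' y'N by auto
    qed
    obtain P' Q' where PQ: "DP P'" "hd P' = II" "last P' = x" "DP Q'" "hd Q' = y'" "last Q' = x" "set P' \<inter> set Q' \<subseteq> {x}"
      using less.hyps[OF lt IH_ok y'N] by blast
    have Q'ne: "Q' \<noteq> []" using PQ by (simp add: dpath_iff)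
    have yQ': "y \<notin> set Q'"
    proof
      assume "y \<in> set Q'"
      then have "pot y' \<le> pot y" using pot_walk[of Q' y] PQ by (auto simp: dpath_iff)
      then show False using pyy' by simp
    qed
    have DQ: "DP (y # Q')"
    proof -
      have "wlk AR (y # Q')" using PQ Q'ne arc by (cases Q') (auto simp: dpath_iff)
      then show ?thesis using PQ yQ' less.prems(2) by (auto simp: dpath_iff)
    qed
    show ?thesis
    proof (cases "y \<in> set P'")
      case False
      note H = this
        show ?thesis apply (rule exI[of _ P'], rule exI[of _ "y # Q'"]) using H PQ DQ Q'ne by auto
    next
      case True
      then obtain j where j: "j < length P'" "P'!j = y" by (auto simp: in_set_conv_nth)
      obtain R where R: "DP R" "hd R = II" "last R = x" "y \<notin> set R" using avoid[OF yI yx] by blast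
      define S where "S = set (drop (Suc j) P') \<union> set Q'"
      have Rne: "R \<noteq> []" using R by (simp add: dpath_iff)
      have ex: "length R - 1 < length R \<and> R ! (length R - 1) \<in> S"
      proof -
        have "x \<in> S" using last_in_set[OF Q'ne] PQ(6) unfolding S_def by auto
        moreover have "R ! (length R - 1) = x" using R(3) last_conv_nth[OF Rne] by simp
        ultimately show ?thesis using Rne by simp
      qed
      define i0 where "i0 = (LEAST i. i < length R \<and> R!i \<in> S)"
      have i0: "i0 < length R" "R!i0 \<in> S" using LeastI[of "\<lambda>i. i < length R \<and> R!i \<in> S", OF ex] unfolding i0_def by auto
      have bef: "set (take i0 R) \<inter> S = {}"
      proof -
        { fix v assume "v \<in> set (take i0 R)" "v \<in> S"
          then obtain i where "i < i0" "R!i = v" using i0 by (auto simp: in_set_conv_nth)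
          then have "i < length R \<and> R!i \<in> S" using i0 \<open>v \<in> S\<close> by auto
          then have False using not_less_Least[of _ "\<lambda>i. i < length R \<and> R!i \<in> S"] \<open>i < i0\<close> unfolding i0_def by blast }
        then show ?thesis by blast
      qed
      have ybef: "y \<notin> set (take i0 R)" using R(4) by (meson in_set_takeD)
      define z where "z = R!i0"
      have RT: "DP (take (Suc i0) R)" "hd (take (Suc i0) R) = II" "last (take (Suc i0) R) = z"
        using dpath_take[OF R(1) i0(1)] R unfolding z_def by auto
      have sRT: "set (take (Suc i0) R) = insert z (set (take i0 R))"
        using i0 unfolding z_def by (simp add: take_Suc_conv_app_nth)
      have dj: "DP (drop j P')" "hd (drop j P') = y" "last (drop j P') = x" using dpath_drop[OF PQ(1) j(1)] j PQ by auto
      have sdj: "set (drop j P') = insert y (set (drop (Suc j) P'))"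
        using j Cons_nth_drop_Suc[OF j(1)] by (metis list.simps(15))
      have distP': "distinct P'" using PQ by (simp add: dpath_iff)
      show ?thesis
      proof (cases "z \<in> set Q'")
        case True
        then obtain k where k: "k < length Q'" "Q'!k = z" by (auto simp: in_set_conv_nth)
        have dk: "DP (drop k Q')" "hd (drop k Q') = z" "last (drop k Q') = x" using dpath_drop[OF PQ(4) k(1)] k PQ by auto
        obtain P where P: "DP P" "hd P = II" "last P = x" "set P \<subseteq> set (take (Suc i0) R) \<union> set (drop k Q')"
          using glue_dp[OF RT(1) dk(1)] RT dk by auto
        have sP: "set P \<subseteq> set (take i0 R) \<union> set Q'" using P(4) sRT True by (auto dest: in_set_dropD)
        have "set P \<inter> set (drop j P') \<subseteq> {x}"
        proof
          fix v assume v: "v \<in> set P \<inter> set (drop j P')"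
          then have vP': "v \<in> set P'" by (auto dest: in_set_dropD)
          show "v \<in> {x}"
          proof (cases "v \<in> set (take i0 R)")
            case True
            then show ?thesis using v sdj bef ybef unfolding S_def by auto
          next
            case False
            then have "v \<in> set Q'" using v sP by auto
            then show ?thesis using vP' PQ(7) by auto
          qed
        qed
        then show ?thesis using P dj by blast
      next
        case False
        then have "z \<in> set (drop (Suc j) P')" using i0 unfolding S_def z_def by auto
        then obtain k' where k': "k' < length (drop (Suc j) P')" "drop (Suc j) P' ! k' = z" by (auto simp: in_set_conv_nth)
        define k where "k = Suc j + k'"
        have k: "k < length P'" "P'!k = z" "j < k" using k' j unfolding k_def by auto
        have dk: "DP (drop k P')" "hd (drop k P') = z" "last (drop k P') = x" using dpath_drop[OF PQ(1) k(1)] k PQ by auto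
        obtain P where P: "DP P" "hd P = II" "last P = x" "set P \<subseteq> set (take (Suc i0) R) \<union> set (drop k P')"
          using glue_dp[OF RT(1) dk(1)] RT dk by auto
        have zk: "z \<in> set (drop k P')" using dk by (metis dpath_iff hd_in_set)
        have sP: "set P \<subseteq> set (take i0 R) \<union> set (drop k P')" using P(4) sRT zk by auto
        have ynk: "y \<notin> set (drop k P')" using nth_notin_drop[OF distP' k(3) j(1)] j by simp
        have "set P \<inter> set (y # Q') \<subseteq> {x}"
        proof
          fix v assume v: "v \<in> set P \<inter> set (y # Q')"
          show "v \<in> {x}"
          proof (cases "v \<in> set (take i0 R)")
            case True
            then show ?thesis using v bef ybef unfolding S_def by auto
          next
            case False
            then have "v \<in> set (drop k P')" using v sP by auto
            then show ?thesis using v ynk PQ(7) by (auto dest: in_set_dropD)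
          qed
        qed
        note H = this
        show ?thesis apply (rule exI[of _ P], rule exI[of _ "y # Q'"]) using H P DQ PQ Q'ne by auto
      qed
    qed
  qed
qed

end


theorem lemma4:
  fixes V :: "'a set" and E :: "'a set set" and w :: "'a set \<Rightarrow> real" and s t x y :: 'a
  assumes "simple_graph V E" and "connected_graph V E"
    and "\<forall>e\<in>E. w e > 0"
    and "s \<in> V" and "t \<in> V"
    and "x \<in> DV V E w s t" and "x \<noteq> s"
    and "y \<in> Cset V E w s t x"
  shows "\<exists>P Q. dpath V E w s t P \<and> hd P = idom V E w s t x \<and> last P = x \<and>
               dpath V E w s t Q \<and> hd Q = y \<and> last Q = x \<and>
               internally_disjoint P Q"
proof -
  interpret GX V E w s t x
    using assms by unfold_locales auto
  have y: "y \<in> DV V E w s t" "anc V E w s t (idom V E w s t x) y" "anc V E w s t y x"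
    using assms(8) unfolding Cset_def by auto
  obtain P Q where PQ: "dpath V E w s t P" "hd P = idom V E w s t x" "last P = x"
    "dpath V E w s t Q" "hd Q = y" "last Q = x" "set P \<inter> set Q \<subseteq> {x}"
    using main[of y] y by blast
  have "internally_disjoint P Q"
    unfolding internally_disjoint_def using PQ by auto
  then show ?thesis using PQ by blast
qed

end
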